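(* Let $p(z)$ be any polynomial of degree $n\ge1$ with complex coefficients, and let $m=20n$. Then $$\sup_{|z|\le1}|p'(z)|\le 2n\sup_{k\in\{1,\dots,m\}}\left|p\!\left(e^{2ik\pi/m}\right)\right|.$$ *)

theory Defs
  imports "HOL-Analysis.Analysis" "HOL-Computational_Algebra.Polynomial"
begin

end

theory Submission
  imports Defs "HOL-Complex_Analysis.Complex_Analysis" "HOL-Computational_Algebra.Fundamental_Theorem_Algebra"
begin
lemma GL_aux:
  fixes P :: "complex poly"
  assumes "degree P = d" "d \<ge> 1" "\<forall>a. poly P a = 0 \<longrightarrow> cmod a < 1" "cmod z \<ge> 1"
  shows "poly P z \<noteq> 0 \<and> Re (z * poly (pderiv P) z / poly P z) > 0"
  using assms
proof (induction d arbitrary: P)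
  case 0 then show ?case by simp
next
  case (Suc d)
  have Pz: "poly P z \<noteq> 0" using Suc.prems(3,4) by force
  have "\<not> constant (poly P)" using Suc.prems(1) by (subst constant_degree) simp
  then obtain a where a: "poly P a = 0" using fundamental_theorem_of_algebra by blast
  have ha: "cmod a < 1" using a Suc.prems(3) by blast
  obtain Q where Q: "P = [:-a,1:] * Q" using a poly_eq_0_iff_dvd by (metis dvdE)
  have Q0: "Q \<noteq> 0" using Q Suc.prems(1) by auto
  have dQ: "degree Q = d" using Suc.prems(1) Q0 unfolding Q by (subst (asm) degree_mult_eq) auto
  have za: "z - a \<noteq> 0" using ha Suc.prems(4) by auto
  have Qz: "poly Q z \<noteq> 0" using Pz Q by simp
  have dP: "poly (pderiv P) z = poly Q z + (z - a) * poly (pderiv Q) z"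
    unfolding Q pderiv_mult by (simp add: pderiv_pCons algebra_simps)
  have key: "z * poly (pderiv P) z / poly P z = z / (z - a) + z * poly (pderiv Q) z / poly Q z"
    using za Qz unfolding dP by (simp add: Q field_simps)
  have r1: "Re (z / (z - a)) > 0"
  proof -
    have "Re (z / (z - a)) = Re (z * cnj (z - a)) / ((Re (z - a))^2 + (Im (z - a))^2)"
      by (simp add: Re_divide algebra_simps)
    moreover have "(Re (z - a))^2 + (Im (z - a))^2 > 0" using za
      by (metis complex_eq_iff sum_power2_gt_zero_iff zero_complex.simps)
    moreover have "Re (z * cnj (z - a)) > 0"
    proof -
      have "Re (z * cnj (z - a)) = (cmod z)^2 - Re (z * cnj a)"
        by (simp add: cmod_power2 algebra_simps) (simp add: power2_eq_square)
      moreover have "Re (z * cnj a) \<le> cmod z * cmod a"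
        by (metis complex_Re_le_cmod complex_mod_cnj norm_mult)
      moreover have "cmod z * cmod a < cmod z * 1" using ha Suc.prems(4) by (intro mult_strict_left_mono) auto
      moreover have "cmod z * 1 \<le> (cmod z)^2" using Suc.prems(4) unfolding power2_eq_square by (intro mult_left_mono) auto
      ultimately show ?thesis by linarith
    qed
    ultimately show ?thesis by simp
  qed
  show ?case
  proof (cases "d = 0")
    case True
    then obtain c where "Q = [:c:]" using dQ degree_eq_zeroE by blast
    then have "pderiv Q = 0" by simp
    then show ?thesis using key r1 Pz by simp
  next
    case False
    have "\<forall>b. poly Q b = 0 \<longrightarrow> cmod b < 1" using Suc.prems(3) Q by auto
    then have "Re (z * poly (pderiv Q) z / poly Q z) > 0" using Suc.IH[OF dQ] False Suc.prems(4) by simp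
    then show ?thesis using key r1 Pz by simp
  qed
qed

lemma maxmod_poly:
  fixes q :: "complex poly"
  assumes "\<And>w. cmod w = 1 \<Longrightarrow> cmod (poly q w) \<le> B" "cmod z \<le> 1"
  shows "cmod (poly q z) \<le> B"
proof (rule maximum_modulus_frontier[where f = "poly q" and S = "cball 0 1"])
  show "poly q holomorphic_on interior (cball 0 1)" by (intro holomorphic_intros)
  show "continuous_on (closure (cball 0 1)) (poly q)" by (intro continuous_intros)
  show "bounded (cball (0::complex) 1)" by simp
  show "\<And>z. z \<in> frontier (cball 0 1) \<Longrightarrow> cmod (poly q z) \<le> B" using assms(1) by simp
  show "z \<in> cball 0 1" using assms(2) by simp
qed

lemma bernstein:
  fixes p :: "complex poly"
  assumes dp: "degree p = n" and n1: "n \<ge> 1"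
  defines "Mc \<equiv> (SUP w\<in>sphere 0 1. cmod (poly p w))"
  shows "Mc > 0" "\<And>w. cmod w = 1 \<Longrightarrow> cmod (poly p w) \<le> Mc"
    "\<And>z. cmod z \<le> 1 \<Longrightarrow> cmod (poly (pderiv p) z) \<le> real n * Mc"
proof -
  have bdd: "bdd_above ((\<lambda>w. cmod (poly p w)) ` sphere 0 1)"
  proof (rule bounded_imp_bdd_above)
    have "compact ((\<lambda>w. cmod (poly p w)) ` sphere 0 1)"
      by (intro compact_continuous_image continuous_intros) simp
    then show "bounded ((\<lambda>w. cmod (poly p w)) ` sphere 0 1)" by (rule compact_imp_bounded)
  qed
  show hle: "\<And>w. cmod w = 1 \<Longrightarrow> cmod (poly p w) \<le> Mc"
    unfolding Mc_def by (rule cSUP_upper[OF _ bdd]) simp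
  define R where "R = reflect_poly p"
  have Rw: "poly R w = w ^ n * poly p (inverse w)" if "w \<noteq> 0" for w
    unfolding R_def using poly_reflect_poly_nz[OF that, of p] dp by simp
  have Rb: "cmod (poly R w) \<le> Mc" if "cmod w \<le> 1" for w
  proof (rule maxmod_poly[OF _ that])
    fix u :: complex assume u: "cmod u = 1"
    then have "u \<noteq> 0" by auto
    then have "cmod (poly R u) = cmod (poly p (inverse u))" using u by (simp add: Rw norm_mult norm_power)
    also have "\<dots> \<le> Mc" using u by (intro hle) (simp add: norm_inverse)
    finally show "cmod (poly R u) \<le> Mc" .
  qed
  have lcb: "cmod (lead_coeff p) \<le> Mc"
    using Rb[of 0] unfolding R_def by (simp add: poly_0_coeff_0)
  have p0: "p \<noteq> 0" using dp n1 by auto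
  then have "lead_coeff p \<noteq> 0" by simp
  then have "cmod (lead_coeff p) > 0" by simp
  then show Mpos: "Mc > 0" using lcb by linarith
  have grow: "cmod (poly p z) \<le> Mc * cmod z ^ n" if z: "cmod z \<ge> 1" for z
  proof -
    have z0: "z \<noteq> 0" using z by auto
    have "poly p z = z ^ n * poly R (inverse z)"
      using Rw[of "inverse z"] z0 by (simp add: power_inverse field_simps)
    then have "cmod (poly p z) = cmod z ^ n * cmod (poly R (inverse z))" by (simp add: norm_mult norm_power)
    also have "\<dots> \<le> cmod z ^ n * Mc" using z by (intro mult_left_mono Rb) (auto simp: norm_inverse inverse_le_1_iff)
    finally show ?thesis by (simp add: mult_ac)
  qed
  have circ: "cmod (poly (pderiv p) z) \<le> real n * Mc" if z: "cmod z = 1" for z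
  proof (rule ccontr)
    assume "\<not> ?thesis"
    then have big: "cmod (poly (pderiv p) z) > real n * Mc" by simp
    have z0: "z \<noteq> 0" using z by auto
    define lam where "lam = poly (pderiv p) z / (of_nat n * of_real Mc * z ^ (n - 1))"
    have nM: "real n * Mc > 0" using Mpos n1 by simp
    have lam1: "cmod lam > 1" unfolding lam_def using big nM z Mpos
      by (simp add: norm_divide norm_mult norm_power)
    define P where "P = p - monom (lam * of_real Mc) n"
    have roots: "\<forall>a. poly P a = 0 \<longrightarrow> cmod a < 1"
    proof (intro allI impI, rule ccontr)
      fix a assume Pa: "poly P a = 0" and "\<not> cmod a < 1"
      then have a1: "cmod a \<ge> 1" by simp
      have "poly p a = lam * of_real Mc * a ^ n" using Pa unfolding P_def by (simp add: poly_monom)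
      then have "cmod (poly p a) = cmod lam * Mc * cmod a ^ n" using Mpos by (simp add: norm_mult norm_power)
      moreover have "cmod lam * Mc * cmod a ^ n > 1 * Mc * cmod a ^ n"
      proof -
        have "cmod a > 0" using a1 by linarith
        then show ?thesis using lam1 Mpos by (intro mult_strict_right_mono) auto
      qed
      ultimately show False using grow[OF a1] by simp
    qed
    have cn: "coeff P n \<noteq> 0"
    proof
      assume "coeff P n = 0"
      then have "lead_coeff p = lam * of_real Mc" unfolding P_def using dp by (simp add: coeff_monom)
      then have "cmod (lead_coeff p) = cmod lam * Mc" using Mpos by (simp add: norm_mult)
      moreover have "cmod lam * Mc > 1 * Mc" using lam1 Mpos by (intro mult_strict_right_mono) auto
      ultimately show False using lcb by simp
    qed
    have "degree P \<le> n" unfolding P_def using dp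
      by (intro degree_diff_le) (auto intro: degree_monom_le order_trans)
    moreover have "n \<le> degree P" using cn by (rule le_degree)
    ultimately have dP: "degree P = n" by simp
    have "poly (pderiv P) z = poly (pderiv p) z - lam * of_real Mc * of_nat n * z ^ (n - 1)"
      unfolding P_def by (simp add: pderiv_diff pderiv_monom poly_monom mult_ac)
    also have "\<dots> = 0" unfolding lam_def using z0 nM Mpos n1 by (simp add: field_simps)
    finally have "poly (pderiv P) z = 0" .
    moreover have "Re (z * poly (pderiv P) z / poly P z) > 0"
      using GL_aux[OF dP n1 roots] z by simp
    ultimately show False by simp
  qed
  show "\<And>z. cmod z \<le> 1 \<Longrightarrow> cmod (poly (pderiv p) z) \<le> real n * Mc"
    by (rule maxmod_poly) (use circ in auto)
qed
lemma chord_le: "cmod (exp (\<i> * of_real x) - exp (\<i> * of_real y)) \<le> \<bar>x - y\<bar>"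
proof -
  define d where "d = x - y"
  have e: "exp (\<i> * of_real x) - exp (\<i> * of_real y) = exp (\<i> * of_real y) * (exp (\<i> * of_real d) - 1)"
    unfolding d_def by (simp add: algebra_simps exp_add[symmetric])
  have n1: "cmod (exp (\<i> * of_real y)) = 1" by simp
  have "(cmod (exp (\<i> * of_real d) - 1))^2 = (cos d - 1)^2 + (sin d)^2"
    by (simp add: cmod_power2 exp_Euler cos_of_real sin_of_real)
  also have "\<dots> = 2 - 2 * cos d" by (simp add: power2_eq_square algebra_simps)
  also have "\<dots> = 4 * (sin (d/2))^2" using cos_double_sin[of "d/2"] by simp
  also have "\<dots> \<le> 4 * (d/2)^2"
    using abs_sin_x_le_abs_x[of "d/2"] by (metis abs_ge_zero power2_abs power_mono mult_left_mono zero_le_numeral)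
  also have "\<dots> = d^2" by (simp add: power2_eq_square)
  finally have "cmod (exp (\<i> * of_real d) - 1) \<le> \<bar>d\<bar>"
    using abs_le_square_iff by (metis abs_norm_cancel)
  then show ?thesis unfolding e norm_mult n1 d_def by simp
qed

lemma near_node:
  assumes w: "cmod w = 1" and m: "m \<ge> (1::nat)"
  shows "\<exists>k\<in>{1..m}. cmod (w - exp (2 * \<i> * of_nat k * of_real pi / of_nat m)) \<le> pi / m"
proof -
  define t where "t = Arg w"
  have wt: "w = exp (\<i> * of_real t)" using Arg_eq[of w] w unfolding t_def by force
  have tb: "-pi < t" "t \<le> pi" using Arg_bounded unfolding t_def by auto
  define s where "s = t * m / (2*pi)"
  define k0 where "k0 = round s"
  have k0a: "of_int k0 \<ge> s - 1/2" "of_int k0 \<le> s + 1/2"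
    unfolding k0_def using of_int_round_ge of_int_round_le by auto
  have sb: "- (real m / 2) < s" "s \<le> real m / 2"
  proof -
    have mp: "real m > 0" using m by simp
    have "- pi * real m < t * real m" using tb(1) mp by (intro mult_strict_right_mono) auto
    moreover have "t * real m \<le> pi * real m" using tb(2) mp by (intro mult_right_mono) auto
    ultimately show "- (real m / 2) < s" "s \<le> real m / 2" unfolding s_def
      using pi_gt_zero by (auto simp: field_simps)
  qed
  define k1 where "k1 = (if k0 \<le> 0 then k0 + int m else k0)"
  have k1b: "1 \<le> k1" "k1 \<le> int m"
  proof -
    have "real_of_int (2*k0) > - real m - 1" using k0a sb by simp
    then have a: "2*k0 > - int m - 1" by linarith
    have "real_of_int (2*k0) \<le> real m + 1" using k0a sb by simp
    then have b: "2*k0 \<le> int m + 1" by linarith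
    show "1 \<le> k1" "k1 \<le> int m" using a b m unfolding k1_def by auto
  qed
  define k where "k = nat k1"
  have kin: "k \<in> {1..m}" using k1b unfolding k_def by auto
  have node: "exp (2 * \<i> * of_nat k * of_real pi / of_nat m) = exp (\<i> * of_real (2 * pi * of_int k0 / m))"
  proof -
    have "exp (2 * \<i> * of_nat k * of_real pi / of_nat m) = exp (\<i> * of_real (2 * pi * of_int k1 / m))"
      using k1b unfolding k_def by (simp add: mult_ac)
    also have "\<dots> = exp (\<i> * of_real (2 * pi * of_int k0 / m))"
    proof (cases "k0 \<le> 0")
      case True
      have "\<i> * of_real (2 * pi * of_int k1 / m) = \<i> * of_real (2 * pi * of_int k0 / m) + 2 * pi * \<i>"
        using True m unfolding k1_def by (simp add: field_simps)
      then show ?thesis by (simp add: exp_add)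
    next
      case False then show ?thesis unfolding k1_def by simp
    qed
    finally show ?thesis .
  qed
  have "\<bar>t - 2 * pi * of_int k0 / m\<bar> = (2*pi/m) * \<bar>s - of_int k0\<bar>"
    using m unfolding s_def by (simp add: field_simps abs_mult[symmetric] abs_divide)
  also have "\<dots> \<le> (2*pi/m) * (1/2)"
  proof (rule mult_left_mono)
    show "\<bar>s - of_int k0\<bar> \<le> 1/2" using k0a by (simp only: abs_le_iff) linarith
  qed simp
  also have "\<dots> = pi / m" by simp
  finally have "cmod (w - exp (2 * \<i> * of_nat k * of_real pi / of_nat m)) \<le> pi / m"
    unfolding node wt using chord_le order_trans by blast
  then show ?thesis using kin by blast
qed


theorem corollaryF3:
  fixes p :: "complex poly" and n m :: nat
  assumes "degree p = n" and "n \<ge> 1" and "m = 20 * n"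
  shows "(SUP z\<in>cball 0 1. cmod (poly (pderiv p) z))
           \<le> 2 * real n * (SUP k\<in>{1..m}. cmod (poly p (exp (2 * \<i> * of_nat k * of_real pi / of_nat m))))"
proof -
  define Mc where "Mc = (SUP w\<in>sphere 0 1. cmod (poly p w))"
  note B = bernstein[OF assms(1,2), folded Mc_def]
  define M where "M = (SUP k\<in>{1..m}. cmod (poly p (exp (2 * \<i> * of_nat k * of_real pi / of_nat m))))"
  have m1: "m \<ge> 1" using assms by simp
  have Mk: "cmod (poly p (exp (2 * \<i> * of_nat k * of_real pi / of_nat m))) \<le> M" if "k \<in> {1..m}" for k
    unfolding M_def by (rule cSUP_upper[OF that]) (intro bdd_above_finite finite_imageI, simp)
  have lip: "cmod (poly p x - poly p y) \<le> (real n * Mc) * cmod (x - y)"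
    if "cmod x \<le> 1" "cmod y \<le> 1" for x y
  proof (rule field_differentiable_bound[where S = "cball 0 1" and f = "poly p" and f' = "poly (pderiv p)"])
    show "convex (cball (0::complex) 1)" by simp
    show "\<And>z. z \<in> cball 0 1 \<Longrightarrow> (poly p has_field_derivative poly (pderiv p) z) (at z within cball 0 1)"
      by (rule has_field_derivative_at_within) simp
    show "\<And>z. z \<in> cball 0 1 \<Longrightarrow> cmod (poly (pderiv p) z) \<le> real n * Mc" using B(3) by simp
    show "x \<in> cball 0 1" "y \<in> cball 0 1" using that by auto
  qed
  have circ: "cmod (poly p w) \<le> M + Mc * (pi / 20)" if w: "cmod w = 1" for w
  proof -
    obtain k where k: "k \<in> {1..m}"
      and d: "cmod (w - exp (2 * \<i> * of_nat k * of_real pi / of_nat m)) \<le> pi / m"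
      using near_node[OF w m1] by blast
    define u where "u = exp (2 * \<i> * of_nat k * of_real pi / of_nat m)"
    have u1: "cmod u = 1"
    proof -
      have "u = exp (\<i> * of_real (2 * of_nat k * pi / of_nat m))" unfolding u_def by (simp add: mult_ac)
      then show ?thesis by simp
    qed
    have "cmod (poly p w) \<le> cmod (poly p u) + cmod (poly p w - poly p u)"
      by (metis norm_triangle_sub add.commute)
    also have "\<dots> \<le> M + (real n * Mc) * (pi / m)"
    proof (rule add_mono)
      show "cmod (poly p u) \<le> M" unfolding u_def by (rule Mk[OF k])
      have "cmod (poly p w - poly p u) \<le> (real n * Mc) * cmod (w - u)" using lip w u1 by simp
      also have "\<dots> \<le> (real n * Mc) * (pi / m)" using d B(1) unfolding u_def
        by (intro mult_left_mono) auto
      finally show "cmod (poly p w - poly p u) \<le> (real n * Mc) * (pi / m)" .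
    qed
    also have "(real n * Mc) * (pi / m) = Mc * (pi / 20)" using assms(2,3) by (simp add: field_simps)
    finally show ?thesis .
  qed
  have "(SUP w\<in>sphere 0 1. cmod (poly p w)) \<le> M + Mc * (pi / 20)"
    by (rule cSUP_least) (use circ in auto)
  then have "Mc \<le> M + Mc * (pi / 20)" by (simp only: Mc_def[symmetric])
  moreover have "Mc * (pi / 20) \<le> Mc * (1/2)" using pi_less_4 B(1) by (intro mult_left_mono) auto
  ultimately have McM: "Mc \<le> 2 * M" by linarith
  have "(SUP z\<in>cball 0 1. cmod (poly (pderiv p) z)) \<le> real n * Mc"
    by (rule cSUP_least) (use B(3) in auto)
  also have "\<dots> \<le> real n * (2 * M)" using McM by (intro mult_left_mono) auto
  finally show ?thesis unfolding M_def by (simp add: mult_ac)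
qed

end
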